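(* Let $\mathbb{K}$ be an algebraically closed field of characteristic zero, $\mathcal{C}\subset\mathbb{K}^2$ an affine irreducible plane curve, $A=(a,b)\in\mathbb{K}^2$, $d\in\mathbb{K}\setminus\{0\}$, and assume that $\mathcal{C}_0\neq\emptyset$ and that $\mathcal{C}$ is not a circle centered at $A$. If $\mathcal{C}$ is not a line passing through $A$, then $\mathfrak{C}(\mathcal{C},A,d)$ has at least one simple component.
   Context: For $\mathcal{C}$ defined by an irreducible polynomial $f(y_1,y_2)$: $\mathfrak{B}(\mathcal{C},A,d)\subset\mathbb{K}^2\times\mathbb{K}^2\times\mathbb{K}$ is the set of $(\bar x,\bar y,w)$ with $f(y_1,y_2)=0$, $(x_1-y_1)^2+(x_2-y_2)^2=d^2$, $(y_2-b)(x_1-y_1)-(y_1-a)(x_2-y_2)=0$, $w((y_1-a)^2+(y_2-b)^2)=1$; $\pi_1,\pi_2$ are the projections $(\bar x,\bar y,w)\mapsto\bar x$, $\mapsto\bar y$; the conchoid $\mathfrak{C}(\mathcal{C},A,d)$ is the Zariski closure of $\pi_1(\mathfrak{B}(\mathcal{C},A,d))$. $\mathcal{C}_0=\{(p_1,p_2)\in\mathcal{C}:(p_1-a)^2+(p_2-b)^2\neq0\}$. An irreducible component $\mathcal{M}$ of $\mathfrak{C}(\mathcal{C},A,d)$ is simple if there is a non-empty Zariski dense $\Omega\subset\mathcal{M}$ with $\mathrm{Card}(\pi_2(\pi_1^{-1}(Q)))=1$ for all $Q\in\Omega$; otherwise special. A circle centered at $A$ of radius $r$ is $(y_1-a)^2+(y_2-b)^2=r^2$.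 *)

theory Defs
  imports "HOL-Computational_Algebra.Polynomial"
begin

text \<open>Bivariate polynomials over K are represented as elements of K[y1][y2],
  i.e. type 'a poly poly: the outer variable is y2, coefficients are polynomials in y1.\<close>

definition eval2 :: "'a::comm_semiring_1 poly poly \<Rightarrow> 'a \<times> 'a \<Rightarrow> 'a" where
  "eval2 f p = poly (map_poly (\<lambda>c. poly c (fst p)) f) (snd p)"

definition zariski_closed2 :: "('a::comm_semiring_1 \<times> 'a) set \<Rightarrow> bool" where
  "zariski_closed2 S \<longleftrightarrow> (\<exists>F. S = {p. \<forall>g\<in>F. eval2 g p = 0})"

definition zariski_closure2 :: "('a::comm_semiring_1 \<times> 'a) set \<Rightarrow> ('a \<times> 'a) set" where
  "zariski_closure2 S = \<Inter>{T. zariski_closed2 T \<and> S \<subseteq> T}"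

definition zariski_irreducible2 :: "('a::comm_semiring_1 \<times> 'a) set \<Rightarrow> bool" where
  "zariski_irreducible2 S \<longleftrightarrow> zariski_closed2 S \<and> S \<noteq> {} \<and>
     (\<forall>S1 S2. zariski_closed2 S1 \<and> zariski_closed2 S2 \<and> S = S1 \<union> S2 \<longrightarrow> S = S1 \<or> S = S2)"

definition irreducible_component2 :: "('a::comm_semiring_1 \<times> 'a) set \<Rightarrow> ('a \<times> 'a) set \<Rightarrow> bool" where
  "irreducible_component2 M X \<longleftrightarrow> M \<subseteq> X \<and> zariski_irreducible2 M \<and>
     (\<forall>N. zariski_irreducible2 N \<and> M \<subseteq> N \<and> N \<subseteq> X \<longrightarrow> N = M)"

definition curve :: "'a::comm_semiring_1 poly poly \<Rightarrow> ('a \<times> 'a) set" where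
  "curve f = {p. eval2 f p = 0}"

definition curve0 :: "'a::comm_ring_1 poly poly \<Rightarrow> 'a \<times> 'a \<Rightarrow> ('a \<times> 'a) set" where
  "curve0 f A = {p \<in> curve f. (fst p - fst A)^2 + (snd p - snd A)^2 \<noteq> 0}"

definition conchoid_B :: "'a::field poly poly \<Rightarrow> 'a \<times> 'a \<Rightarrow> 'a \<Rightarrow> (('a \<times> 'a) \<times> ('a \<times> 'a) \<times> 'a) set" where
  "conchoid_B f A d = {((x1,x2),(y1,y2),w). eval2 f (y1,y2) = 0 \<and>
       (x1 - y1)^2 + (x2 - y2)^2 = d^2 \<and>
       (y2 - snd A) * (x1 - y1) - (y1 - fst A) * (x2 - y2) = 0 \<and>
       w * ((y1 - fst A)^2 + (y2 - snd A)^2) = 1}"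

definition pi1 :: "('a \<times> 'a) \<times> ('a \<times> 'a) \<times> 'a \<Rightarrow> 'a \<times> 'a" where
  "pi1 t = fst t"

definition pi2 :: "('a \<times> 'a) \<times> ('a \<times> 'a) \<times> 'a \<Rightarrow> 'a \<times> 'a" where
  "pi2 t = fst (snd t)"

definition conchoid :: "'a::field poly poly \<Rightarrow> 'a \<times> 'a \<Rightarrow> 'a \<Rightarrow> ('a \<times> 'a) set" where
  "conchoid f A d = zariski_closure2 (pi1 ` conchoid_B f A d)"

definition simple_component :: "'a::field poly poly \<Rightarrow> 'a \<times> 'a \<Rightarrow> 'a \<Rightarrow> ('a \<times> 'a) set \<Rightarrow> bool" where
  "simple_component f A d M \<longleftrightarrow> irreducible_component2 M (conchoid f A d) \<and>
     (\<exists>\<Omega>. \<Omega> \<noteq> {} \<and> \<Omega> \<subseteq> M \<and> zariski_closure2 \<Omega> = M \<and>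
        (\<forall>Q\<in>\<Omega>. card (pi2 ` (pi1 -` {Q} \<inter> conchoid_B f A d)) = 1))"

definition circle_centered :: "'a::comm_ring_1 \<times> 'a \<Rightarrow> 'a \<Rightarrow> ('a \<times> 'a) set" where
  "circle_centered A r = {(y1,y2). (y1 - fst A)^2 + (y2 - snd A)^2 = r^2}"

definition line_through :: "'a::comm_ring_1 \<times> 'a \<Rightarrow> 'a \<Rightarrow> 'a \<Rightarrow> ('a \<times> 'a) set" where
  "line_through A \<alpha> \<beta> = {(y1,y2). \<alpha> * (y1 - fst A) + \<beta> * (y2 - snd A) = 0}"

end

theory Submission imports Defs begin

lemma eval2_pCons: "eval2 (pCons c f) (x,y) = poly c x + y * eval2 f (x,y)"
  by (simp add: eval2_def map_poly_pCons)

lemma eval2_0[simp]: "eval2 0 p = 0"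
  by (simp add: eval2_def)

lemma eval2_alt: "eval2 f (x,y) = poly (poly f [:y:]) x"
  by (induction f) (auto simp: eval2_pCons)

lemma eval2_alt': "eval2 f p = poly (poly f [:snd p:]) (fst p)"
  using eval2_alt[of f "fst p" "snd p"] by simp

lemma eval2_add: "eval2 (f + g) p = eval2 f p + eval2 g p"
  by (simp add: eval2_alt')
lemma eval2_mult: "eval2 (f * g) p = eval2 f p * eval2 g p"
  by (simp add: eval2_alt')
lemma eval2_diff: "eval2 (f - g) p = eval2 f p - (eval2 g p :: 'a::comm_ring_1)"
  by (simp add: eval2_alt')
lemma eval2_const: "eval2 [:[:c:]:] p = c"
  by (simp add: eval2_alt')
lemma eval2_X1: "eval2 [:[:0,1:]:] p = fst p"
  by (simp add: eval2_alt')
lemma eval2_X2: "eval2 [:0,1:] p = snd p"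
  by (simp add: eval2_alt')

lemma eval2_poly_comp: "poly (poly f r) x = eval2 f (x, poly r x)"
  by (induction f) (auto simp: eval2_pCons)

definition Pol :: "('a::comm_ring_1 \<times> 'a \<Rightarrow> 'a) set" where
  "Pol = {h. \<exists>P. \<forall>Q. h Q = eval2 P Q}"

lemma Pol_const: "(\<lambda>Q. c) \<in> Pol"
  unfolding Pol_def mem_Collect_eq by (rule exI[of _ "[:[:c:]:]"]) (simp add: eval2_const)
lemma Pol_fst: "fst \<in> Pol"
  unfolding Pol_def mem_Collect_eq by (rule exI[of _ "[:[:0,1:]:]"]) (simp add: eval2_X1)
lemma Pol_snd: "snd \<in> Pol"
  unfolding Pol_def mem_Collect_eq by (rule exI[of _ "[:0,1:]"]) (simp add: eval2_X2)
lemma Pol_add: "g \<in> Pol \<Longrightarrow> h \<in> Pol \<Longrightarrow> (\<lambda>Q. g Q + h Q) \<in> Pol"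
proof -
  assume "g \<in> Pol" "h \<in> Pol"
  then obtain P R where "\<forall>Q. g Q = eval2 P Q" "\<forall>Q. h Q = eval2 R Q" unfolding Pol_def by blast
  then show ?thesis unfolding Pol_def mem_Collect_eq by (intro exI[of _ "P + R"]) (simp add: eval2_add)
qed
lemma Pol_mult: "g \<in> Pol \<Longrightarrow> h \<in> Pol \<Longrightarrow> (\<lambda>Q. g Q * h Q) \<in> Pol"
proof -
  assume "g \<in> Pol" "h \<in> Pol"
  then obtain P R where "\<forall>Q. g Q = eval2 P Q" "\<forall>Q. h Q = eval2 R Q" unfolding Pol_def by blast
  then show ?thesis unfolding Pol_def mem_Collect_eq by (intro exI[of _ "P * R"]) (simp add: eval2_mult)
qed
lemma Pol_diff: "g \<in> Pol \<Longrightarrow> h \<in> Pol \<Longrightarrow> (\<lambda>Q. g Q - h Q) \<in> Pol"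
proof -
  assume "g \<in> Pol" "h \<in> Pol"
  then obtain P R where "\<forall>Q. g Q = eval2 P Q" "\<forall>Q. h Q = eval2 R Q" unfolding Pol_def by blast
  then show ?thesis unfolding Pol_def mem_Collect_eq by (intro exI[of _ "P - R"]) (simp add: eval2_diff)
qed
lemma Pol_pow: "g \<in> Pol \<Longrightarrow> (\<lambda>Q. g Q ^ n) \<in> Pol"
  by (induction n) (auto intro: Pol_mult Pol_const)

definition nnf :: "'a::comm_ring_1 \<times> 'a \<Rightarrow> 'a \<times> 'a \<Rightarrow> 'a" where
  "nnf A Q = (fst Q - fst A)^2 + (snd Q - snd A)^2"

lemma Pol_nnf: "nnf A \<in> Pol"
  unfolding nnf_def by (intro Pol_add Pol_pow Pol_diff Pol_fst Pol_snd Pol_const)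

definition good :: "'a::comm_ring_1 \<times> 'a \<Rightarrow> 'a \<Rightarrow> nat \<Rightarrow> ('a \<times> 'a \<Rightarrow> 'a \<Rightarrow> 'a) \<Rightarrow> bool" where
  "good A d k H \<longleftrightarrow> (\<exists>a b. a \<in> Pol \<and> b \<in> Pol \<and>
     (\<forall>Q c. c^2 * nnf A Q = d^2 \<longrightarrow> nnf A Q ^ k * H Q c = a Q + c * b Q))"

definition Good where "Good A d H \<longleftrightarrow> (\<exists>k. good A d k H)"

lemma good_Suc: assumes "good A d k H" shows "good A d (Suc k) H"
proof -
  obtain a b where ab: "a \<in> Pol" "b \<in> Pol"
    "\<forall>Q c. c^2 * nnf A Q = d^2 \<longrightarrow> nnf A Q ^ k * H Q c = a Q + c * b Q"
    using assms unfolding good_def by blast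
  show ?thesis unfolding good_def
  proof (intro exI conjI allI impI)
    show "(\<lambda>Q. nnf A Q * a Q) \<in> Pol" "(\<lambda>Q. nnf A Q * b Q) \<in> Pol"
      using ab by (auto intro: Pol_mult Pol_nnf)
    fix Q c assume "c^2 * nnf A Q = d^2"
    then have "nnf A Q ^ k * H Q c = a Q + c * b Q" using ab by blast
    then have "nnf A Q * (nnf A Q ^ k * H Q c) = nnf A Q * (a Q + c * b Q)" by simp
    then show "nnf A Q ^ Suc k * H Q c = nnf A Q * a Q + c * (nnf A Q * b Q)"
      by (simp add: algebra_simps)
  qed
qed

lemma good_le: "good A d k H \<Longrightarrow> k \<le> l \<Longrightarrow> good A d l H"
  by (induction l) (auto simp: le_Suc_eq intro: good_Suc)

lemma Good_pol: "h \<in> Pol \<Longrightarrow> Good A d (\<lambda>Q c. h Q)"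
  unfolding Good_def good_def
  by (intro exI[of _ 0] exI[of _ h] exI[of _ "\<lambda>Q. 0"]) (auto intro: Pol_const)

lemma Good_c: "Good A d (\<lambda>Q c. c)"
  unfolding Good_def good_def
  by (intro exI[of _ 0] exI[of _ "\<lambda>Q. 0"] exI[of _ "\<lambda>Q. 1"]) (auto intro: Pol_const)

lemma Good_add: assumes "Good A d H1" "Good A d H2" shows "Good A d (\<lambda>Q c. H1 Q c + H2 Q c)"
proof -
  obtain k l where kl: "good A d k H1" "good A d l H2" using assms unfolding Good_def by blast
  then have g: "good A d (max k l) H1" "good A d (max k l) H2" by (auto intro: good_le)
  obtain a1 b1 where 1: "a1 \<in> Pol" "b1 \<in> Pol"
    "\<forall>Q c. c^2 * nnf A Q = d^2 \<longrightarrow> nnf A Q ^ max k l * H1 Q c = a1 Q + c * b1 Q"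
    using g(1) unfolding good_def by blast
  obtain a2 b2 where 2: "a2 \<in> Pol" "b2 \<in> Pol"
    "\<forall>Q c. c^2 * nnf A Q = d^2 \<longrightarrow> nnf A Q ^ max k l * H2 Q c = a2 Q + c * b2 Q"
    using g(2) unfolding good_def by blast
  show ?thesis unfolding Good_def good_def
  proof (intro exI conjI allI impI)
    show "(\<lambda>Q. a1 Q + a2 Q) \<in> Pol" "(\<lambda>Q. b1 Q + b2 Q) \<in> Pol"
      using 1 2 by (auto intro: Pol_add)
    fix Q c assume h: "c^2 * nnf A Q = d^2"
    show "nnf A Q ^ max k l * (H1 Q c + H2 Q c) = (a1 Q + a2 Q) + c * (b1 Q + b2 Q)"
    proof -
      have "nnf A Q ^ max k l * H1 Q c = a1 Q + c * b1 Q" "nnf A Q ^ max k l * H2 Q c = a2 Q + c * b2 Q"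
        using 1(3) 2(3) h by blast+
      then show ?thesis by (simp add: algebra_simps)
    qed
  qed
qed

lemma Good_mult: assumes "Good A d H1" "Good A d H2" shows "Good A d (\<lambda>Q c. H1 Q c * H2 Q c)"
proof -
  obtain k l where kl: "good A d k H1" "good A d l H2" using assms unfolding Good_def by blast
  obtain a1 b1 where 1: "a1 \<in> Pol" "b1 \<in> Pol"
    "\<forall>Q c. c^2 * nnf A Q = d^2 \<longrightarrow> nnf A Q ^ k * H1 Q c = a1 Q + c * b1 Q"
    using kl(1) unfolding good_def by blast
  obtain a2 b2 where 2: "a2 \<in> Pol" "b2 \<in> Pol"
    "\<forall>Q c. c^2 * nnf A Q = d^2 \<longrightarrow> nnf A Q ^ l * H2 Q c = a2 Q + c * b2 Q"
    using kl(2) unfolding good_def by blast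
  show ?thesis unfolding Good_def good_def
  proof (intro exI[of _ "Suc (k + l)"] exI conjI allI impI)
    show "(\<lambda>Q. nnf A Q * (a1 Q * a2 Q) + d^2 * (b1 Q * b2 Q)) \<in> Pol"
      using 1 2 by (auto intro!: Pol_add Pol_mult Pol_nnf Pol_const)
    show "(\<lambda>Q. nnf A Q * (a1 Q * b2 Q + a2 Q * b1 Q)) \<in> Pol"
      using 1 2 by (auto intro!: Pol_add Pol_mult Pol_nnf)
    fix Q c assume h: "c^2 * nnf A Q = d^2"
    have e1: "nnf A Q ^ k * H1 Q c = a1 Q + c * b1 Q" using 1(3) h by blast
    have e2: "nnf A Q ^ l * H2 Q c = a2 Q + c * b2 Q" using 2(3) h by blast
    have "nnf A Q ^ Suc (k + l) * (H1 Q c * H2 Q c)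
        = nnf A Q * ((nnf A Q ^ k * H1 Q c) * (nnf A Q ^ l * H2 Q c))"
      by (simp add: power_add algebra_simps)
    also have "\<dots> = nnf A Q * ((a1 Q + c * b1 Q) * (a2 Q + c * b2 Q))" using e1 e2 by simp
    also have "\<dots> = nnf A Q * (a1 Q * a2 Q) + (c^2 * nnf A Q) * (b1 Q * b2 Q)
        + c * (nnf A Q * (a1 Q * b2 Q + a2 Q * b1 Q))"
      by (simp add: algebra_simps power2_eq_square)
    finally show "nnf A Q ^ Suc (k + l) * (H1 Q c * H2 Q c) =
        nnf A Q * (a1 Q * a2 Q) + d^2 * (b1 Q * b2 Q) + c * (nnf A Q * (a1 Q * b2 Q + a2 Q * b1 Q))"
      using h by simp
  qed
qed

lemma Good_poly: "Good A d X \<Longrightarrow> Good A d (\<lambda>Q c. poly p (X Q c))"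
proof (induction p)
  case 0 then show ?case using Good_pol[OF Pol_const[of 0]] by simp
next
  case (pCons a p)
  then show ?case
    using Good_add[OF Good_pol[OF Pol_const[of a]] Good_mult[OF pCons.prems pCons.IH]]
    by simp
qed

lemma Good_eval2: "Good A d X \<Longrightarrow> Good A d Y \<Longrightarrow> Good A d (\<lambda>Q c. eval2 f (X Q c, Y Q c))"
proof (induction f)
  case 0 then show ?case using Good_pol[OF Pol_const[of 0]] by simp
next
  case (pCons a p)
  then show ?case
    using Good_add[OF Good_poly[OF pCons.prems(1), of a] Good_mult[OF pCons.prems(2) pCons.IH]]
    by (simp add: eval2_pCons)
qed

definition yc :: "'a::comm_ring_1 \<times> 'a \<Rightarrow> 'a \<times> 'a \<Rightarrow> 'a \<Rightarrow> 'a \<times> 'a" where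
  "yc A Q c = (fst Q + c * (fst A - fst Q), snd Q + c * (snd A - snd Q))"

lemma Good_Hf: "Good A d (\<lambda>Q c. eval2 f (yc A Q c))"
  unfolding yc_def
  by (intro Good_eval2 Good_add Good_mult Good_pol Good_c Pol_fst Pol_snd Pol_diff Pol_const)

lemma B_char:
  fixes A :: "'a::field \<times> 'a"
  assumes "(Q, y, w) \<in> conchoid_B f A d" "nnf A Q \<noteq> 0"
  shows "\<exists>c. c^2 * nnf A Q = d^2 \<and> y = yc A Q c \<and> eval2 f (yc A Q c) = 0"
proof -
  obtain x1 x2 y1 y2 where Q: "Q = (x1,x2)" and y: "y = (y1,y2)" by (cases Q, cases y) auto
  obtain a b where A: "A = (a,b)" by (cases A)
  have h: "eval2 f (y1,y2) = 0" "(x1 - y1)^2 + (x2 - y2)^2 = d^2"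
     "(y2 - b) * (x1 - y1) - (y1 - a) * (x2 - y2) = 0"
     "w * ((y1 - a)^2 + (y2 - b)^2) = 1"
    using assms(1) unfolding Q y A conchoid_B_def by auto
  have N: "(y1 - a)^2 + (y2 - b)^2 \<noteq> 0" using h(4) by auto
  obtain l where l: "x1 - y1 = l * (y1 - a)" "x2 - y2 = l * (y2 - b)"
  proof (cases "y1 = a")
    case True
    then have "y2 \<noteq> b" using N by auto
    moreover have "x1 - y1 = 0" using h(3) True \<open>y2 \<noteq> b\<close> by simp
    ultimately show ?thesis using True that[of "(x2 - y2) / (y2 - b)"] by auto
  next
    case False
    have "x2 - y2 = (x1 - y1) / (y1 - a) * (y2 - b)"
      using h(3) False by (simp add: field_simps)
    then show ?thesis using False that[of "(x1 - y1) / (y1 - a)"] by auto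
  qed
  have nn: "nnf A Q = (1 + l)^2 * ((y1 - a)^2 + (y2 - b)^2)"
  proof -
    have e: "x1 - a = (1 + l) * (y1 - a)" "x2 - b = (1 + l) * (y2 - b)" using l by (simp_all add: algebra_simps)
    have "nnf A Q = (x1 - a)^2 + (x2 - b)^2" unfolding nnf_def Q A by simp
    also have "\<dots> = ((1 + l) * (y1 - a))^2 + ((1 + l) * (y2 - b))^2" by (simp only: e)
    also have "\<dots> = (1 + l)^2 * ((y1 - a)^2 + (y2 - b)^2)" by (simp add: power2_eq_square algebra_simps)
    finally show ?thesis .
  qed
  have l1: "1 + l \<noteq> 0" using assms(2) nn by auto
  define c where "c = l / (1 + l)"
  have y_eq: "y = yc A Q c"
  proof -
    have "x1 - a = (1 + l) * (y1 - a)" "x2 - b = (1 + l) * (y2 - b)" using l by (simp_all add: algebra_simps)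
    then show ?thesis unfolding y yc_def Q A c_def using l l1 by (auto simp: field_simps)
  qed
  have "c^2 * nnf A Q = l^2 * ((y1 - a)^2 + (y2 - b)^2)"
  proof -
    have "c * (1 + l) = l" unfolding c_def using l1 by simp
    then have "c^2 * (1 + l)^2 = l^2" by (metis power_mult_distrib)
    then show ?thesis unfolding nn by (metis mult.assoc)
  qed
  also have "\<dots> = (l * (y1 - a))^2 + (l * (y2 - b))^2" by (simp only: power_mult_distrib distrib_left)
  also have "\<dots> = d^2" using h(2) l by simp
  finally show ?thesis using y_eq h(1) y by auto
qed

lemma yc_norm:
  fixes A :: "'a::comm_ring_1 \<times> 'a"
  shows "(fst (yc A Q c) - fst A)^2 + (snd (yc A Q c) - snd A)^2 = (1 - c)^2 * nnf A Q"
  unfolding yc_def nnf_def by (simp add: power2_eq_square algebra_simps)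

lemma B_intro:
  fixes A :: "'a::field \<times> 'a"
  assumes "c^2 * nnf A Q = d^2" "nnf A Q \<noteq> d^2" "eval2 f (yc A Q c) = 0"
  shows "(Q, yc A Q c, 1 / ((1 - c)^2 * nnf A Q)) \<in> conchoid_B f A d"
proof -
  have "c \<noteq> 1" using assms(1,2) by auto
  moreover have "nnf A Q \<noteq> 0" using assms(1,2) by auto
  ultimately have nz: "(1 - c)^2 * nnf A Q \<noteq> 0" by simp
  obtain x1 x2 where Q: "Q = (x1,x2)" by (cases Q)
  obtain a b where A: "A = (a,b)" by (cases A)
  obtain y1 y2 where Y: "yc A Q c = (y1, y2)" by (cases "yc A Q c")
  have y: "y1 = x1 + c * (a - x1)" "y2 = x2 + c * (b - x2)" using Y unfolding yc_def Q A by auto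
  have N: "(y1 - a)^2 + (y2 - b)^2 = (1 - c)^2 * nnf A Q"
    using yc_norm[of A Q c] Y A by simp
  have nq: "nnf A Q = (x1 - a)^2 + (x2 - b)^2" unfolding nnf_def Q A by simp
  have 1: "eval2 f (y1, y2) = 0" using assms(3) Y by simp
  have 2: "(x1 - y1)^2 + (x2 - y2)^2 = d^2"
  proof -
    have "(x1 - y1)^2 + (x2 - y2)^2 = c^2 * ((x1 - a)^2 + (x2 - b)^2)"
      unfolding y by (simp add: power2_eq_square algebra_simps)
    then show ?thesis using assms(1) nq by simp
  qed
  have 3: "(y2 - b) * (x1 - y1) - (y1 - a) * (x2 - y2) = 0"
    unfolding y by (simp add: algebra_simps)
  have 4: "1 / ((1 - c)^2 * nnf A Q) * ((y1 - a)^2 + (y2 - b)^2) = 1"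
    using N nz by simp
  have "(Q, (y1, y2), 1 / ((1 - c)^2 * nnf A Q)) \<in> conchoid_B f A d"
    using 1 2 3 4 unfolding conchoid_B_def by (simp add: Q A)
  then show ?thesis using Y by simp
qed

lemma closed_Inter:
  fixes TT :: "('a::comm_semiring_1 \<times> 'a) set set"
  assumes h: "\<And>T. T \<in> TT \<Longrightarrow> zariski_closed2 T"
  shows "zariski_closed2 (\<Inter>TT)"
proof -
  define G :: "('a \<times> 'a) set \<Rightarrow> 'a poly poly set"
    where "G T = (SOME F. T = {p. \<forall>g\<in>F. eval2 g p = 0})" for T
  have G: "T = {p. \<forall>g\<in>G T. eval2 g p = 0}" if "T \<in> TT" for T
    using h[OF that] unfolding zariski_closed2_def G_def by (rule someI_ex)
  have "\<Inter>TT = {p. \<forall>g\<in>(\<Union>T\<in>TT. G T). eval2 g p = 0}"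
  proof (intro equalityI subsetI)
    fix p assume "p \<in> \<Inter>TT"
    then show "p \<in> {p. \<forall>g\<in>(\<Union>T\<in>TT. G T). eval2 g p = 0}" using G by blast
  next
    fix p assume "p \<in> {p. \<forall>g\<in>(\<Union>T\<in>TT. G T). eval2 g p = 0}"
    then show "p \<in> \<Inter>TT" using G by blast
  qed
  then show ?thesis unfolding zariski_closed2_def by blast
qed

lemma closed_Int: "zariski_closed2 S1 \<Longrightarrow> zariski_closed2 S2 \<Longrightarrow> zariski_closed2 (S1 \<inter> S2)"
  using closed_Inter[of "{S1, S2}"] by auto

lemma closed_Pol: "h \<in> Pol \<Longrightarrow> zariski_closed2 {Q. h Q = 0}"
proof -
  assume "h \<in> Pol"
  then obtain P where "\<forall>Q. h Q = eval2 P Q" unfolding Pol_def by blast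
  then have "{Q. h Q = 0} = {p. \<forall>g\<in>{P}. eval2 g p = 0}" by auto
  then show ?thesis unfolding zariski_closed2_def by blast
qed

lemma closed_closure: "zariski_closed2 (zariski_closure2 S)"
  unfolding zariski_closure2_def by (rule closed_Inter) auto

lemma closure_sup: "S \<subseteq> zariski_closure2 S"
  unfolding zariski_closure2_def by auto

lemma closure_min: "zariski_closed2 T \<Longrightarrow> S \<subseteq> T \<Longrightarrow> zariski_closure2 S \<subseteq> T"
  unfolding zariski_closure2_def by auto

lemma closed_single: "zariski_closed2 {q :: 'a::comm_ring_1 \<times> 'a}"
proof -
  have "{q} = {Q. fst Q - fst q = 0} \<inter> {Q. snd Q - snd q = 0}"
    by (cases q) auto
  moreover have "zariski_closed2 {Q. fst Q - fst q = 0}" "zariski_closed2 {Q. snd Q - snd q = 0}"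
    by (intro closed_Pol Pol_diff Pol_fst Pol_snd Pol_const)+
  ultimately show ?thesis using closed_Int by metis
qed

lemma irred_single: "zariski_irreducible2 {q :: 'a::comm_ring_1 \<times> 'a}"
  unfolding zariski_irreducible2_def using closed_single
  by (metis Un_empty insert_not_empty singleton_Un_iff)

lemma chain_irred:
  assumes C: "C \<noteq> {}" "\<And>Z. Z \<in> C \<Longrightarrow> zariski_irreducible2 Z"
    and ch: "\<And>Z1 Z2. Z1 \<in> C \<Longrightarrow> Z2 \<in> C \<Longrightarrow> Z1 \<subseteq> Z2 \<or> Z2 \<subseteq> Z1"
  shows "zariski_irreducible2 (zariski_closure2 (\<Union>C))"
proof -
  let ?U = "zariski_closure2 (\<Union>C)"
  have ne: "?U \<noteq> {}" using C closure_sup[of "\<Union>C"] unfolding zariski_irreducible2_def by blast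
  have "?U = S1 \<or> ?U = S2" if cl: "zariski_closed2 S1" "zariski_closed2 S2" and U: "?U = S1 \<union> S2" for S1 S2
  proof (rule ccontr)
    assume nn: "\<not> (?U = S1 \<or> ?U = S2)"
    have sub: "Z \<subseteq> S1 \<or> Z \<subseteq> S2" if Z: "Z \<in> C" for Z
    proof -
      have irr: "zariski_irreducible2 Z" using C(2) Z .
      have "Z \<subseteq> ?U" using Z closure_sup[of "\<Union>C"] by blast
      then have "Z = (Z \<inter> S1) \<union> (Z \<inter> S2)" using U by blast
      moreover have "zariski_closed2 (Z \<inter> S1)" "zariski_closed2 (Z \<inter> S2)"
        using irr cl closed_Int unfolding zariski_irreducible2_def by blast+
      ultimately have "Z = Z \<inter> S1 \<or> Z = Z \<inter> S2" using irr unfolding zariski_irreducible2_def by blast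
      then show ?thesis by blast
    qed
    have "\<exists>Z1\<in>C. \<not> Z1 \<subseteq> S1"
    proof (rule ccontr)
      assume "\<not> ?thesis"
      then have "\<Union>C \<subseteq> S1" by blast
      then have "?U \<subseteq> S1" using closure_min cl by blast
      then show False using nn U by blast
    qed
    then obtain Z1 where Z1: "Z1 \<in> C" "\<not> Z1 \<subseteq> S1" "Z1 \<subseteq> S2" using sub by blast
    have "\<exists>Z2\<in>C. \<not> Z2 \<subseteq> S2"
    proof (rule ccontr)
      assume "\<not> ?thesis"
      then have "\<Union>C \<subseteq> S2" by blast
      then have "?U \<subseteq> S2" using closure_min cl by blast
      then show False using nn U by blast
    qed
    then obtain Z2 where Z2: "Z2 \<in> C" "\<not> Z2 \<subseteq> S2" "Z2 \<subseteq> S1" using sub by blast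
    from ch[OF Z1(1) Z2(1)] show False using Z1 Z2 by blast
  qed
  then show ?thesis using ne closed_closure unfolding zariski_irreducible2_def by blast
qed

lemma exists_component:
  fixes X :: "('a::comm_ring_1 \<times> 'a) set"
  assumes X: "zariski_closed2 X" and q: "q \<in> X"
  shows "\<exists>M. irreducible_component2 M X \<and> q \<in> M"
proof -
  define AA where "AA = {Z. zariski_irreducible2 Z \<and> q \<in> Z \<and> Z \<subseteq> X}"
  have "\<exists>M\<in>AA. \<forall>Z\<in>AA. M \<subseteq> Z \<longrightarrow> Z = M"
  proof (rule Zorn_Lemma2, intro ballI)
    fix C assume "C \<in> chains AA"
    then have CA: "C \<subseteq> AA" and ch: "\<And>Z1 Z2. Z1 \<in> C \<Longrightarrow> Z2 \<in> C \<Longrightarrow> Z1 \<subseteq> Z2 \<or> Z2 \<subseteq> Z1"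
      unfolding chains_def chain_subset_def by auto
    show "\<exists>U\<in>AA. \<forall>Z\<in>C. Z \<subseteq> U"
    proof (cases "C = {}")
      case True
      then show ?thesis using irred_single[of q] q unfolding AA_def by auto
    next
      case False
      let ?U = "zariski_closure2 (\<Union>C)"
      have "zariski_irreducible2 ?U"
        by (rule chain_irred[OF False]) (use CA ch AA_def in auto)
      moreover have "?U \<subseteq> X" using closure_min[OF X] CA unfolding AA_def by blast
      moreover have "\<forall>Z\<in>C. Z \<subseteq> ?U" using closure_sup[of "\<Union>C"] by blast
      moreover have "q \<in> ?U" using False CA closure_sup[of "\<Union>C"] unfolding AA_def by blast
      ultimately show ?thesis unfolding AA_def by blast
    qed
  qed
  then obtain M where M: "M \<in> AA" "\<forall>Z\<in>AA. M \<subseteq> Z \<longrightarrow> Z = M" by blast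
  have "irreducible_component2 M X"
    unfolding irreducible_component2_def
  proof (intro conjI allI impI)
    show "M \<subseteq> X" "zariski_irreducible2 M" using M unfolding AA_def by auto
    fix N assume "zariski_irreducible2 N \<and> M \<subseteq> N \<and> N \<subseteq> X"
    then show "N = M" using M unfolding AA_def by blast
  qed
  then show ?thesis using M unfolding AA_def by blast
qed

lemma dense_open:
  fixes M :: "('a::comm_ring_1 \<times> 'a) set"
  assumes M: "zariski_irreducible2 M" and Z: "zariski_closed2 Z" and q: "q \<in> M" "q \<notin> Z"
  shows "zariski_closure2 (M - Z) = M"
proof -
  have Mc: "zariski_closed2 M" using M unfolding zariski_irreducible2_def by blast
  have 1: "zariski_closure2 (M - Z) \<subseteq> M" by (rule closure_min[OF Mc]) blast
  have "M = zariski_closure2 (M - Z) \<union> (M \<inter> Z)" using 1 closure_sup[of "M - Z"] by blast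
  moreover have "zariski_closed2 (M \<inter> Z)" using closed_Int[OF Mc Z] .
  ultimately have "M = zariski_closure2 (M - Z) \<or> M = M \<inter> Z"
    using M closed_closure unfolding zariski_irreducible2_def by blast
  then show ?thesis using q by blast
qed

lemma infinite_roots_zero:
  fixes p :: "'a::idom poly"
  assumes "infinite Y" "\<forall>y\<in>Y. poly p y = 0"
  shows "p = 0"
proof (rule ccontr)
  assume "p \<noteq> 0"
  then have "finite {x. poly p x = 0}" by (rule poly_roots_finite)
  moreover have "Y \<subseteq> {x. poly p x = 0}" using assms(2) by auto
  ultimately show False using assms(1) finite_subset by blast
qed

lemma unit_pp:
  fixes h :: "'a::field poly poly"
  assumes "h dvd 1"
  shows "\<exists>c. c \<noteq> 0 \<and> h = [:[:c:]:]"
proof -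
  obtain h0 where h0: "h = [:h0:]" "h0 dvd 1" using assms is_unit_poly_iff by blast
  then obtain c where "h0 = [:c:]" "c dvd 1" using is_unit_poly_iff by blast
  then show ?thesis using h0 by auto
qed

lemma line_lemma:
  fixes f :: "'a::field poly poly" and A :: "'a \<times> 'a"
  assumes irr: "irreducible f" and e: "(e1, e2) \<noteq> (0, 0)" and T: "infinite T"
    and z: "\<forall>t\<in>T. eval2 f (fst A + t * e1, snd A + t * e2) = 0"
  shows "curve f = line_through A e2 (- e1)"
proof (cases "e1 = 0")
  case False
  define r0 where "r0 = [: snd A - fst A * e2 / e1, e2 / e1 :]"
  have r0: "poly r0 (fst A + t * e1) = snd A + t * e2" for t
    unfolding r0_def using False by (simp add: field_simps)
  have "inj_on (\<lambda>t. fst A + t * e1) T" using False by (auto simp: inj_on_def)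
  then have Yinf: "infinite ((\<lambda>t. fst A + t * e1) ` T)" using T finite_imageD by blast
  have "\<forall>y\<in>(\<lambda>t. fst A + t * e1) ` T. poly (poly f r0) y = 0"
    using z by (auto simp: eval2_poly_comp r0)
  then have "poly f r0 = 0" using infinite_roots_zero[OF Yinf] by blast
  then have "[:-r0, 1:] dvd f" using poly_eq_0_iff_dvd by blast
  then obtain h where fh: "f = [:-r0, 1:] * h" by (auto elim: dvdE)
  have "\<not> [:-r0, 1:] dvd 1" using is_unit_poly_iff[of "[:-r0, 1:]"] by auto
  then have "h dvd 1" using irreducibleD[OF irr fh] by blast
  then obtain c where c: "c \<noteq> 0" "h = [:[:c:]:]" using unit_pp by blast
  have ev: "eval2 f (x, y) = (y - poly r0 x) * c" for x y
    unfolding fh c(2) eval2_mult eval2_const by (simp add: eval2_pCons)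
  show ?thesis
  proof (intro equalityI subsetI)
    fix p assume "p \<in> curve f"
    then obtain x y where p: "p = (x, y)" "eval2 f (x, y) = 0" unfolding curve_def by (cases p) auto
    then have "y = poly r0 x" using ev c by simp
    then show "p \<in> line_through A e2 (- e1)" unfolding line_through_def p r0_def using False
      by (simp add: field_simps)
  next
    fix p assume "p \<in> line_through A e2 (- e1)"
    then obtain x y where p: "p = (x, y)" "e2 * (x - fst A) + - e1 * (y - snd A) = 0"
      unfolding line_through_def by (cases p) auto
    then have "y = poly r0 x" unfolding r0_def using False by (simp add: field_simps)
    then show "p \<in> curve f" unfolding curve_def p using ev by simp
  qed
next
  case True
  then have e2: "e2 \<noteq> 0" using e by auto
  define a where "a = fst A"
  have "inj_on (\<lambda>t. snd A + t * e2) T" using e2 by (auto simp: inj_on_def)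
  then have Yinf: "infinite ((\<lambda>t. snd A + t * e2) ` T)" using T finite_imageD by blast
  have "\<forall>y\<in>(\<lambda>t. snd A + t * e2) ` T. poly (map_poly (\<lambda>c. poly c a) f) y = 0"
    using z True unfolding a_def by (auto simp: eval2_def)
  then have m0: "map_poly (\<lambda>c. poly c a) f = 0" using infinite_roots_zero[OF Yinf] by blast
  have "\<forall>i. [:-a, 1:] dvd coeff f i"
  proof
    fix i
    have "poly (coeff f i) a = coeff (map_poly (\<lambda>c. poly c a) f) i" by (simp add: coeff_map_poly)
    then have "poly (coeff f i) a = 0" using m0 by simp
    then show "[:-a, 1:] dvd coeff f i" using poly_eq_0_iff_dvd by blast
  qed
  then have "[:[:-a, 1:]:] dvd f" using const_poly_dvd_iff by blast
  then obtain h where fh: "f = [:[:-a, 1:]:] * h" by (auto elim: dvdE)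
  have "\<not> [:[:-a, 1:]:] dvd 1"
  proof
    assume "[:[:-a, 1:]:] dvd 1"
    then have "[:-a, 1:] dvd 1" using is_unit_const_poly_iff by blast
    then show False using is_unit_pCons_iff[of "-a" "[:1:]"] by simp
  qed
  then have "h dvd 1" using irreducibleD[OF irr fh] by blast
  then obtain c where c: "c \<noteq> 0" "h = [:[:c:]:]" using unit_pp by blast
  have ev: "eval2 f (x, y) = (x - a) * c" for x y
    unfolding fh c(2) eval2_mult eval2_const by (simp add: eval2_alt')
  show ?thesis
  proof (intro equalityI subsetI)
    fix p assume "p \<in> curve f"
    then obtain x y where p: "p = (x, y)" "eval2 f (x, y) = 0" unfolding curve_def by (cases p) auto
    then show "p \<in> line_through A e2 (- e1)" using ev c True unfolding line_through_def a_def by simp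
  next
    fix p assume "p \<in> line_through A e2 (- e1)"
    then obtain x y where p: "p = (x, y)" "e2 * (x - fst A) + - e1 * (y - snd A) = 0"
      unfolding line_through_def by (cases p) auto
    then show "p \<in> curve f" unfolding curve_def using ev e2 True a_def by simp
  qed
qed

lemma unique_pre:
  fixes A :: "'a::field \<times> 'a"
  assumes c: "c^2 * nnf A Q = d^2" and nd: "nnf A Q \<noteq> d^2"
    and z: "eval2 f (yc A Q c) = 0" and nz: "eval2 f (yc A Q (-c)) \<noteq> 0"
  shows "pi2 ` (pi1 -` {Q} \<inter> conchoid_B f A d) = {yc A Q c}"
proof -
  have n0: "nnf A Q \<noteq> 0" using c nd by auto
  have "(Q, yc A Q c, 1 / ((1 - c)^2 * nnf A Q)) \<in> conchoid_B f A d"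
    by (rule B_intro[OF c nd z])
  then have 1: "yc A Q c \<in> pi2 ` (pi1 -` {Q} \<inter> conchoid_B f A d)"
    unfolding pi1_def pi2_def by force
  have 2: "y = yc A Q c" if "y \<in> pi2 ` (pi1 -` {Q} \<inter> conchoid_B f A d)" for y
  proof -
    from that obtain tt where tt0: "tt \<in> pi1 -` {Q} \<inter> conchoid_B f A d" "y = pi2 tt" by blast
    then have tt: "tt \<in> conchoid_B f A d" "fst tt = Q" "y = fst (snd tt)"
      unfolding pi1_def pi2_def by auto
    then have "(Q, y, snd (snd tt)) \<in> conchoid_B f A d" by (cases tt) auto
    from B_char[OF this n0] obtain c' where c': "c'^2 * nnf A Q = d^2" "y = yc A Q c'" "eval2 f (yc A Q c') = 0"
      by blast
    have "c'^2 = c^2" using c c' n0 by (metis mult_right_cancel)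
    then have "c' = c \<or> c' = -c" by (simp add: power2_eq_iff)
    then show ?thesis using c' nz by auto
  qed
  show ?thesis using 1 2 by blast
qed

lemma sqrt_ex: "\<exists>y. y^2 = (x :: 'a :: alg_closed_field)"
  using nth_root_exists[of 2] by simp

lemma good_point:
  fixes f :: "'a::{alg_closed_field, field_char_0} poly poly"
    and A :: "'a \<times> 'a" and d :: 'a
  assumes irr: "irreducible f"
    and d: "d \<noteq> 0"
    and C0: "curve0 f A \<noteq> {}"
    and L: "\<forall>\<alpha> \<beta>. (\<alpha>, \<beta>) \<noteq> (0, 0) \<longrightarrow> curve f \<noteq> line_through A \<alpha> \<beta>"
  shows "\<exists>Q c. nnf A Q \<noteq> 0 \<and> nnf A Q \<noteq> d^2 \<and> c^2 * nnf A Q = d^2 \<and>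
           eval2 f (yc A Q c) = 0 \<and> eval2 f (yc A Q (-c)) \<noteq> 0"
proof (rule ccontr)
  assume "\<not> ?thesis"
  then have H: "\<And>Q c. nnf A Q \<noteq> 0 \<Longrightarrow> nnf A Q \<noteq> d^2 \<Longrightarrow> c^2 * nnf A Q = d^2 \<Longrightarrow>
           eval2 f (yc A Q c) = 0 \<Longrightarrow> eval2 f (yc A Q (-c)) = 0" by blast
  obtain a0 b0 where A: "A = (a0, b0)" by (cases A)
  obtain u1 u2 where y0: "eval2 f (u1, u2) = 0" "(u1 - a0)^2 + (u2 - b0)^2 \<noteq> 0"
    using C0 unfolding curve0_def curve_def A by auto
  obtain r where r: "r^2 = (u1 - a0)^2 + (u2 - b0)^2" using sqrt_ex by blast
  obtain s where s: "s^2 = (u1 - a0)^2 + (u2 - b0)^2" "\<And>m. s \<noteq> - (of_nat (Suc m) * d)"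
  proof (cases "\<exists>m. r = - (of_nat (Suc m) * d)")
    case False
    then show ?thesis using that[of r] r by blast
  next
    case True
    then obtain m where m: "r = - (of_nat (Suc m) * d)" by blast
    have "- r \<noteq> - (of_nat (Suc m') * d)" for m'
    proof
      assume "- r = - (of_nat (Suc m') * d)"
      then have "(of_nat (Suc m + Suc m') :: 'a) * d = 0" unfolding m by (simp add: algebra_simps)
      then show False using d by (simp del: of_nat_Suc)
    qed
    then show ?thesis using that[of "-r"] r by simp
  qed
  have s0: "s \<noteq> 0" using s(1) y0(2) by auto
  define e1 where "e1 = (u1 - a0) / s"
  define e2 where "e2 = (u2 - b0) / s"
  have ee: "e1^2 + e2^2 = 1" unfolding e1_def e2_def using s(1) s0 y0(2)
    by (simp add: power_divide add_divide_distrib[symmetric])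
  define P where "P k = (a0 + (s + 2 * of_nat k * d) * e1, b0 + (s + 2 * of_nat k * d) * e2)" for k :: nat
  have Pk: "eval2 f (P k) = 0" for k
  proof (induction k)
    case 0
    have "P 0 = (u1, u2)" unfolding P_def e1_def e2_def using s0 by simp
    then show ?case using y0 by simp
  next
    case (Suc k)
    define t where "t = s + 2 * of_nat k * d"
    have td: "t + d \<noteq> 0"
    proof
      assume h: "t + d = 0"
      have "s = (t + d) - (of_nat (Suc (2 * k)) * d)" unfolding t_def by (simp add: algebra_simps)
      then have "s = - (of_nat (Suc (2 * k)) * d)" using h by simp
      then show False using s(2) by blast
    qed
    have t0: "t \<noteq> 0"
    proof
      assume t: "t = 0"
      show False
      proof (cases k)
        case 0 then show False using t s0 unfolding t_def by simp
      next
        case (Suc j)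
        have "s = t - (of_nat (Suc (2 * j + 1)) * d)" unfolding t_def Suc by (simp add: algebra_simps)
        then have "s = - (of_nat (Suc (2 * j + 1)) * d)" using t by simp
        then show False using s(2) by blast
      qed
    qed
    have t2: "t + 2 * d \<noteq> 0"
    proof
      assume h: "t + 2 * d = 0"
      have "s = (t + 2 * d) - (of_nat (Suc (2 * k + 1)) * d)" unfolding t_def by (simp add: algebra_simps)
      then have "s = - (of_nat (Suc (2 * k + 1)) * d)" using h by simp
      then show False using s(2) by blast
    qed
    define Q where "Q = (a0 + (t + d) * e1, b0 + (t + d) * e2)"
    define c where "c = d / (t + d)"
    have nQ: "nnf A Q = (t + d)^2"
    proof -
      have "nnf A Q = (t + d)^2 * (e1^2 + e2^2)" unfolding nnf_def A Q_def
        by (simp add: power2_eq_square algebra_simps)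
      then show ?thesis using ee by simp
    qed
    have n1: "nnf A Q \<noteq> 0" using nQ td by simp
    have n2: "nnf A Q \<noteq> d^2"
    proof
      assume "nnf A Q = d^2"
      then have "(t + d)^2 = d^2" using nQ by simp
      then have "t + d = d \<or> t + d = - d" by (simp add: power2_eq_iff)
      then show False using t0 t2 by (auto simp: algebra_simps)
    qed
    have c2: "c^2 * nnf A Q = d^2" unfolding nQ c_def using td by (simp add: power_divide)
    have "yc A Q c = P k" unfolding yc_def A Q_def c_def P_def t_def[symmetric] using td
      by (simp add: field_simps)
    then have "eval2 f (yc A Q c) = 0" using Suc.IH by simp
    then have "eval2 f (yc A Q (-c)) = 0" using H[OF n1 n2 _] c2 by simp
    moreover have "yc A Q (-c) = P (Suc k)" unfolding yc_def A Q_def c_def P_def using td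
      by (simp add: field_simps t_def)
    ultimately show ?case by simp
  qed
  define T where "T = range (\<lambda>k::nat. s + 2 * of_nat k * d)"
  have "inj (\<lambda>k::nat. s + 2 * of_nat k * d)" using d by (auto simp: inj_def)
  then have Tinf: "infinite T" unfolding T_def using range_inj_infinite by blast
  have e: "(e1, e2) \<noteq> (0, 0)" using ee by auto
  have "\<forall>t\<in>T. eval2 f (fst A + t * e1, snd A + t * e2) = 0" using Pk unfolding T_def P_def A by auto
  then have "curve f = line_through A e2 (- e1)" using line_lemma[OF irr e Tinf] by blast
  moreover have "(e2, - e1) \<noteq> (0, 0)" using e by auto
  ultimately show False using L by blast
qed

lemma main_thm:
  fixes f :: "'a::{alg_closed_field, field_char_0} poly poly"
    and A :: "'a \<times> 'a" and d :: 'a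
  assumes irr: "irreducible f"
    and d: "d \<noteq> 0"
    and C0: "curve0 f A \<noteq> {}"
    and L: "\<forall>\<alpha> \<beta>. (\<alpha>, \<beta>) \<noteq> (0, 0) \<longrightarrow> curve f \<noteq> line_through A \<alpha> \<beta>"
  shows "\<exists>M. simple_component f A d M"
proof -
  obtain k a b where ab: "a \<in> Pol" "b \<in> Pol"
    and key: "\<And>Q c. c^2 * nnf A Q = d^2 \<Longrightarrow> nnf A Q ^ k * eval2 f (yc A Q c) = a Q + c * b Q"
    using Good_Hf[of A d f] unfolding Good_def good_def by blast
  define g1 where "g1 Q = nnf A Q * (nnf A Q * (a Q)^2 - d^2 * (b Q)^2)" for Q
  define g2 where "g2 Q = nnf A Q * (nnf A Q - d^2) * a Q" for Q
  have g1P: "g1 \<in> Pol" unfolding g1_def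
    using ab by (intro Pol_mult Pol_diff Pol_nnf Pol_const Pol_pow)
  have g2P: "g2 \<in> Pol" unfolding g2_def
    using ab by (intro Pol_mult Pol_diff Pol_nnf Pol_const)
  let ?S = "pi1 ` conchoid_B f A d"
  let ?X = "conchoid f A d"
  have SZ: "?S \<subseteq> {Q. g1 Q = 0}"
  proof
    fix Q assume "Q \<in> ?S"
    then obtain tt where tt: "tt \<in> conchoid_B f A d" "Q = fst tt" unfolding pi1_def by auto
    then have mem: "(Q, fst (snd tt), snd (snd tt)) \<in> conchoid_B f A d" by (cases tt) auto
    show "Q \<in> {Q. g1 Q = 0}"
    proof (cases "nnf A Q = 0")
      case True then show ?thesis unfolding g1_def by simp
    next
      case False
      from B_char[OF mem False] obtain c where c: "c^2 * nnf A Q = d^2" "eval2 f (yc A Q c) = 0"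
        by blast
      have c': "(-c)^2 * nnf A Q = d^2" using c by simp
      have "a Q + c * b Q = 0" using key[OF c(1)] c(2) by simp
      moreover have "nnf A Q * (a Q)^2 - d^2 * (b Q)^2 = nnf A Q * ((a Q - c * b Q) * (a Q + c * b Q))"
        using c(1) by (simp add: power2_eq_square algebra_simps)
      ultimately show ?thesis unfolding g1_def by simp
    qed
  qed
  have Xc: "zariski_closed2 ?X" unfolding conchoid_def by (rule closed_closure)
  have XZ: "?X \<subseteq> {Q. g1 Q = 0}" unfolding conchoid_def
    by (rule closure_min[OF closed_Pol[OF g1P] SZ])
  obtain q c where q: "nnf A q \<noteq> 0" "nnf A q \<noteq> d^2" "c^2 * nnf A q = d^2"
     "eval2 f (yc A q c) = 0" "eval2 f (yc A q (-c)) \<noteq> 0"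
    using good_point[OF irr d C0 L] by blast
  have "(q, yc A q c, 1 / ((1 - c)^2 * nnf A q)) \<in> conchoid_B f A d"
    by (rule B_intro[OF q(3) q(2) q(4)])
  then have qS: "q \<in> ?S" unfolding pi1_def by force
  then have qX: "q \<in> ?X" unfolding conchoid_def using closure_sup by blast
  have "g2 q \<noteq> 0"
  proof -
    have e1: "a q + c * b q = 0" using key[OF q(3)] q(4) by simp
    have c': "(-c)^2 * nnf A q = d^2" using q(3) by simp
    have "nnf A q ^ k * eval2 f (yc A q (-c)) \<noteq> 0" using q(1,5) by simp
    then have "a q - c * b q \<noteq> 0" using key[OF c'] by simp
    then have "a q \<noteq> 0" using e1 by auto
    then show ?thesis unfolding g2_def using q(1,2) by simp
  qed
  obtain M where M: "irreducible_component2 M ?X" "q \<in> M" using exists_component[OF Xc qX] by blast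
  have Mirr: "zariski_irreducible2 M" and MX: "M \<subseteq> ?X" using M(1) unfolding irreducible_component2_def by auto
  define \<Omega> where "\<Omega> = M - {Q. g2 Q = 0}"
  have cl: "zariski_closure2 \<Omega> = M" unfolding \<Omega>_def
    by (rule dense_open[OF Mirr closed_Pol[OF g2P] M(2)]) (use \<open>g2 q \<noteq> 0\<close> in simp)
  have card: "card (pi2 ` (pi1 -` {Q} \<inter> conchoid_B f A d)) = 1" if Q: "Q \<in> \<Omega>" for Q
  proof -
    have g1Q: "g1 Q = 0" using Q MX XZ unfolding \<Omega>_def by blast
    have g2Q: "g2 Q \<noteq> 0" using Q unfolding \<Omega>_def by blast
    have n0: "nnf A Q \<noteq> 0" and n1: "nnf A Q \<noteq> d^2" and a0: "a Q \<noteq> 0"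
      using g2Q unfolding g2_def by auto
    have eq: "nnf A Q * (a Q)^2 = d^2 * (b Q)^2" using g1Q n0 unfolding g1_def by simp
    obtain c0 where c0: "c0^2 = d^2 / nnf A Q" using sqrt_ex by blast
    have c0n: "c0^2 * nnf A Q = d^2" using c0 n0 by simp
    have "(a Q + c0 * b Q) * (a Q - c0 * b Q) = ((nnf A Q * (a Q)^2 - d^2 * (b Q)^2)) / nnf A Q"
      using c0 n0 by (simp add: power2_eq_square field_simps)
    then have prod: "(a Q + c0 * b Q) * (a Q - c0 * b Q) = 0" using eq by simp
    obtain c where c: "c^2 * nnf A Q = d^2" "a Q + c * b Q = 0"
    proof (cases "a Q + c0 * b Q = 0")
      case True then show ?thesis using that c0n by blast
    next
      case False
      then have "a Q - c0 * b Q = 0" using prod by simp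
      then show ?thesis using that[of "-c0"] c0n by simp
    qed
    have c': "(-c)^2 * nnf A Q = d^2" using c by simp
    have z: "eval2 f (yc A Q c) = 0" using key[OF c(1)] c(2) n0 by simp
    have e2: "a Q - c * b Q = 2 * a Q" using c(2) by (simp add: algebra_simps)
    have a2: "2 * a Q \<noteq> 0" using a0 by simp
    have ne: "a Q - c * b Q \<noteq> 0"
    proof
      assume "a Q - c * b Q = 0"
      then show False using e2 a2 by simp
    qed
    have kk: "nnf A Q ^ k * eval2 f (yc A Q (-c)) = a Q - c * b Q" using key[OF c'] by simp
    have nz: "eval2 f (yc A Q (-c)) \<noteq> 0"
    proof
      assume "eval2 f (yc A Q (-c)) = 0"
      then show False using kk ne by simp
    qed
    have U: "pi2 ` (pi1 -` {Q} \<inter> conchoid_B f A d) = {yc A Q c}"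
      by (rule unique_pre[OF c(1) n1 z nz])
    have c1: "card {yc A Q c} = 1" by (rule is_singleton_altdef[THEN iffD1]) (rule is_singletonI)
    show ?thesis by (subst U) (rule c1)
  qed
  have "simple_component f A d M"
    unfolding simple_component_def
  proof (intro conjI exI[of _ \<Omega>])
    show "irreducible_component2 M (conchoid f A d)" by (rule M(1))
    show "\<Omega> \<noteq> {}" using M(2) \<open>g2 q \<noteq> 0\<close> unfolding \<Omega>_def by blast
    show "\<Omega> \<subseteq> M" unfolding \<Omega>_def by blast
    show "zariski_closure2 \<Omega> = M" by (rule cl)
    show "\<forall>Q\<in>\<Omega>. card (pi2 ` (pi1 -` {Q} \<inter> conchoid_B f A d)) = 1" using card by blast
  qed
  then show ?thesis by blast
qed


theorem theorem3:
  fixes f :: "'a::{alg_closed_field, field_char_0} poly poly"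
    and A :: "'a \<times> 'a" and d :: 'a
  assumes "irreducible f"
    and "d \<noteq> 0"
    and "curve0 f A \<noteq> {}"
    and "\<forall>r. curve f \<noteq> circle_centered A r"
    and "\<forall>\<alpha> \<beta>. (\<alpha>, \<beta>) \<noteq> (0, 0) \<longrightarrow> curve f \<noteq> line_through A \<alpha> \<beta>"
  shows "\<exists>M. simple_component f A d M"
  using main_thm[OF assms(1) assms(2) assms(3) assms(5)] .

end
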